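(* Let $\mathcal D$ be a distribution over $\mathcal X\times\{A,B\}\times\{0,1\}$, $\alpha\in[0,1)$, $\mathcal Q$ any distribution over $\mathcal X\times\{A,B\}\times\{0,1\}$, and $\widetilde{\mathcal D}=(1-\alpha)\mathcal D+\alpha\mathcal Q$. Let $h$ be a fixed hypothesis in a hypothesis class $\mathcal H$ of group-aware hypotheses $\mathcal X\times\{A,B\}\to\{0,1\}$, and fix a group $A$ with $r_A^+:=\Pr_{\mathcal D}[y=1\wedge x\in A]>0$. Then $$\big|\mathrm{TPR}_A(h,\widetilde{\mathcal D})-\mathrm{TPR}_A(h,\mathcal D)\big|\le\frac{\alpha}{(1-\alpha)r_A^++\alpha},$$ where $\mathrm{TPR}_A(h,\mathcal D')=\Pr_{\mathcal D'}[h(x)=1\mid y=1,\ x\in A]$.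
   Context: Examples are triples (features $x$, group in $\{A,B\}$, label $y$); $\widetilde{\mathcal D}$ models malicious noise in which an $\alpha$ fraction of samples comes from an adversarial distribution $\mathcal Q$. *)

theory Defs
  imports "HOL-Probability.Probability"
begin

datatype grp = GA | GB

text \<open>Examples are triples (x, g, y); labels y in {0,1} are encoded as bool (True = 1).\<close>

definition example_space :: "'x measure \<Rightarrow> ('x \<times> grp \<times> bool) measure" where
  "example_space M = M \<Otimes>\<^sub>M (count_space UNIV \<Otimes>\<^sub>M count_space UNIV)"

definition mixture :: "real \<Rightarrow> 'a measure \<Rightarrow> 'a measure \<Rightarrow> 'a measure" where
  "mixture \<alpha> D Q = measure_of (space D) (sets D)
     (\<lambda>S. ennreal (1 - \<alpha>) * emeasure D S + ennreal \<alpha> * emeasure Q S)"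

definition TPR :: "grp \<Rightarrow> ('x \<times> grp \<Rightarrow> bool) \<Rightarrow> ('x \<times> grp \<times> bool) measure \<Rightarrow> real" where
  "TPR g h D' = cond_prob D' (\<lambda>(x, g', y). h (x, g')) (\<lambda>(x, g', y). y \<and> g' = g)"

end

theory Submission
  imports Defs
begin

lemma mixture_emeasure:
  assumes "0 \<le> \<alpha>" "\<alpha> \<le> 1" "sets Q = sets D"
  shows "S \<in> sets D \<Longrightarrow> emeasure (mixture \<alpha> D Q) S = ennreal (1 - \<alpha>) * emeasure D S + ennreal \<alpha> * emeasure Q S"
  and "sets (mixture \<alpha> D Q) = sets D"
proof -
  have ca: "countably_additive (sets D) (\<lambda>S. ennreal (1 - \<alpha>) * emeasure D S + ennreal \<alpha> * emeasure Q S)"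
    unfolding countably_additive_def
  proof (intro allI impI)
    fix A :: "nat \<Rightarrow> _"
    assume h: "range A \<subseteq> sets D" "disjoint_family A" "\<Union> (range A) \<in> sets D"
    have "(\<Sum>i. ennreal (1 - \<alpha>) * emeasure D (A i) + ennreal \<alpha> * emeasure Q (A i))
      = (\<Sum>i. ennreal (1 - \<alpha>) * emeasure D (A i)) + (\<Sum>i. ennreal \<alpha> * emeasure Q (A i))"
      by (subst suminf_add) auto
    also have "\<dots> = ennreal (1 - \<alpha>) * (\<Sum>i. emeasure D (A i)) + ennreal \<alpha> * (\<Sum>i. emeasure Q (A i))"
      by simp
    also have "(\<Sum>i. emeasure D (A i)) = emeasure D (\<Union> (range A))"
      using h by (intro suminf_emeasure) auto
    also have "(\<Sum>i. emeasure Q (A i)) = emeasure Q (\<Union> (range A))"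
      using h assms(3) by (intro suminf_emeasure) auto
    finally show "(\<Sum>i. ennreal (1 - \<alpha>) * emeasure D (A i) + ennreal \<alpha> * emeasure Q (A i))
      = ennreal (1 - \<alpha>) * emeasure D (\<Union> (range A)) + ennreal \<alpha> * emeasure Q (\<Union> (range A))" .
  qed
  have pos: "positive (sets D) (\<lambda>S. ennreal (1 - \<alpha>) * emeasure D S + ennreal \<alpha> * emeasure Q S)"
    by (simp add: positive_def)
  show "S \<in> sets D \<Longrightarrow> emeasure (mixture \<alpha> D Q) S = ennreal (1 - \<alpha>) * emeasure D S + ennreal \<alpha> * emeasure Q S"
    unfolding mixture_def
    by (rule emeasure_measure_of_sigma[OF sets.sigma_algebra_axioms pos ca])
  show "sets (mixture \<alpha> D Q) = sets D"
    unfolding mixture_def by (simp add: sets.space_closed)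
qed

lemma mixture_space: "space (mixture \<alpha> D Q) = space D"
  unfolding mixture_def by (simp add: sets.space_closed)

lemma mixture_measure:
  assumes "0 \<le> \<alpha>" "\<alpha> \<le> 1" "sets Q = sets D" "prob_space D" "prob_space Q" "S \<in> sets D"
  shows "measure (mixture \<alpha> D Q) S = (1 - \<alpha>) * measure D S + \<alpha> * measure Q S"
proof -
  interpret D: prob_space D by fact
  interpret Q: prob_space Q by fact
  have "emeasure (mixture \<alpha> D Q) S = ennreal ((1 - \<alpha>) * measure D S + \<alpha> * measure Q S)"
    using mixture_emeasure(1)[OF assms(1-3,6)] assms
    by (simp add: D.emeasure_eq_measure Q.emeasure_eq_measure ennreal_mult' ennreal_plus)
  moreover have "0 \<le> (1 - \<alpha>) * measure D S + \<alpha> * measure Q S" using assms(1,2) by simp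
  ultimately show ?thesis unfolding measure_def by simp
qed

lemma key_ineq:
  fixes a b c d \<alpha> :: real
  assumes "0 \<le> a" "a \<le> b" "0 < b" "0 \<le> c" "c \<le> d" "d \<le> 1" "0 \<le> \<alpha>" "\<alpha> < 1"
  shows "\<bar>((1-\<alpha>)*a + \<alpha>*c) / ((1-\<alpha>)*b + \<alpha>*d) - a/b\<bar> \<le> \<alpha> / ((1 - \<alpha>) * b + \<alpha>)"
proof -
  have den: "(1-\<alpha>)*b + \<alpha>*d > 0" using assms by (smt (verit) mult_nonneg_nonneg mult_pos_pos)
  have eq: "((1-\<alpha>)*a + \<alpha>*c) / ((1-\<alpha>)*b + \<alpha>*d) - a/b = \<alpha>*(c*b - d*a) / (((1-\<alpha>)*b + \<alpha>*d)*b)"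
    using den assms by (simp add: field_simps)
  have "\<bar>c*b - d*a\<bar> \<le> d*b"
  proof -
    have "c*b \<le> d*b" using assms by (simp add: mult_right_mono)
    moreover have "d*a \<le> d*b" using assms by (smt (verit) mult_left_mono)
    moreover have "0 \<le> d*a" "0 \<le> c*b" using assms by auto
    ultimately show ?thesis by linarith
  qed
  then have "\<alpha>*\<bar>c*b - d*a\<bar> \<le> \<alpha>*(d*b)" using assms by (simp add: mult_left_mono)
  then have "\<alpha>*\<bar>c*b - d*a\<bar> / (((1-\<alpha>)*b + \<alpha>*d)*b) \<le> \<alpha>*(d*b) / (((1-\<alpha>)*b + \<alpha>*d)*b)"
    using den assms by (intro divide_right_mono) auto
  then have "\<bar>\<alpha>*(c*b - d*a) / (((1-\<alpha>)*b + \<alpha>*d)*b)\<bar> \<le> \<alpha>*(d*b) / (((1-\<alpha>)*b + \<alpha>*d)*b)"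
    using den assms by (simp add: abs_mult)
  also have "\<dots> = \<alpha>*d / ((1-\<alpha>)*b + \<alpha>*d)" using assms by simp
  also have "\<dots> \<le> \<alpha> / ((1 - \<alpha>) * b + \<alpha>)"
  proof (cases "\<alpha> = 0")
    case False
    then have "\<alpha>*d * ((1 - \<alpha>) * b + \<alpha>) \<le> \<alpha> * ((1-\<alpha>)*b + \<alpha>*d)"
    proof -
      have "0 \<le> \<alpha>*b*(1-\<alpha>)*(1-d)" using assms by simp
      then show ?thesis by (simp add: algebra_simps)
    qed
    moreover have "(1 - \<alpha>) * b + \<alpha> > 0" using assms by (smt (verit) mult_pos_pos)
    ultimately show ?thesis using den by (simp add: divide_simps)
  qed simp
  finally show ?thesis using eq by simp
qed

theorem mainTheorem6:
  fixes M :: "'x measure"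
    and D Q :: "('x \<times> grp \<times> bool) measure"
    and \<alpha> :: real
    and H :: "('x \<times> grp \<Rightarrow> bool) set"
    and h :: "'x \<times> grp \<Rightarrow> bool"
  assumes "prob_space D" and "sets D = sets (example_space M)"
    and "prob_space Q" and "sets Q = sets (example_space M)"
    and "0 \<le> \<alpha>" and "\<alpha> < 1"
    and "h \<in> H"
    and "h \<in> measurable (M \<Otimes>\<^sub>M count_space UNIV) (count_space UNIV)"
    and "\<P>(\<omega> in D. snd (snd \<omega>) \<and> fst (snd \<omega>) = GA) > 0"
  shows "\<bar>TPR GA h (mixture \<alpha> D Q) - TPR GA h D\<bar>
           \<le> \<alpha> / ((1 - \<alpha>) * \<P>(\<omega> in D. snd (snd \<omega>) \<and> fst (snd \<omega>) = GA) + \<alpha>)"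
proof -
  interpret D: prob_space D by fact
  interpret Q: prob_space Q by fact
  define Y where "Y = {\<omega> \<in> space D. snd (snd \<omega>) \<and> fst (snd \<omega>) = GA}"
  define PY where "PY = {\<omega> \<in> space D. h (fst \<omega>, fst (snd \<omega>)) \<and> (snd (snd \<omega>) \<and> fst (snd \<omega>) = GA)}"
  have sQ: "sets Q = sets D" using assms(2,4) by simp
  have spQ: "space Q = space D" using sets_eq_imp_space_eq[OF sQ] .
  have meas_g: "(\<lambda>\<omega>. (fst \<omega>, fst (snd \<omega>))) \<in> measurable D (M \<Otimes>\<^sub>M count_space UNIV)"
    using assms(2) unfolding example_space_def
    by (simp add: measurable_cong_sets[OF assms(2) refl] example_space_def)
  have hm: "(\<lambda>\<omega>. h (fst \<omega>, fst (snd \<omega>))) \<in> measurable D (count_space UNIV)"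
    using measurable_comp[OF meas_g assms(8)] by (simp add: comp_def)
  have sm: "(\<lambda>\<omega>. snd (snd \<omega>) \<and> fst (snd \<omega>) = GA) \<in> measurable D (count_space UNIV)"
    using assms(2) unfolding example_space_def
    by (simp add: measurable_cong_sets[OF assms(2) refl] example_space_def)
  have Ym: "Y \<in> sets D" unfolding Y_def
    using measurable_sets[OF sm, of "{True}"] by (simp add: vimage_def Int_def conj_commute)
  have PYm: "PY \<in> sets D" unfolding PY_def
    using measurable_sets[OF hm, of "{True}"] Ym unfolding Y_def
    by (simp add: vimage_def Int_def conj_commute Collect_conj_eq[symmetric])
  have sub: "PY \<subseteq> Y" unfolding PY_def Y_def by auto
  have e1: "{\<omega> \<in> space D. (case \<omega> of (x, g', y) \<Rightarrow> h (x, g')) \<and> (case \<omega> of (x, g', y) \<Rightarrow> y \<and> g' = GA)} = PY"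
    unfolding PY_def by (auto split: prod.splits)
  have e2: "{\<omega> \<in> space D. (case \<omega> of (x, g', y) \<Rightarrow> y \<and> g' = GA)} = Y"
    unfolding Y_def by (auto split: prod.splits)
  have tD: "TPR GA h D = measure D PY / measure D Y"
    unfolding TPR_def cond_prob_def using e1 e2 by simp
  have tM: "TPR GA h (mixture \<alpha> D Q) = measure (mixture \<alpha> D Q) PY / measure (mixture \<alpha> D Q) Y"
    unfolding TPR_def cond_prob_def mixture_space using e1 e2 by simp
  have al: "\<alpha> \<le> 1" using assms(6) by simp
  have "\<bar>((1-\<alpha>)*measure D PY + \<alpha>*measure Q PY) / ((1-\<alpha>)*measure D Y + \<alpha>*measure Q Y) - measure D PY/measure D Y\<bar>
     \<le> \<alpha> / ((1 - \<alpha>) * measure D Y + \<alpha>)"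
    apply (rule key_ineq)
    using assms(5,6,9) sub PYm Ym sQ
    by (auto simp: Y_def[symmetric] intro!: D.finite_measure_mono Q.finite_measure_mono)
  then show ?thesis
    using tD tM mixture_measure[OF assms(5) al sQ assms(1,3) PYm] mixture_measure[OF assms(5) al sQ assms(1,3) Ym]
    by (simp add: Y_def)
qed

end
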